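(* Let $\mathcal{R}$ be a field and $(\mathcal{C}^{\bullet},\partial)$ a bigraded cochain complex of $\mathcal{R}$-vector spaces as in the context. Then there are vector space isomorphisms \[ B^{2}(\mathcal{C},\partial)\cong(B^{2}(\mathcal{C},\partial)\cap\mathcal{C}^{2,0})\oplus(\mathcal{B}^{2}_{1}\cap\mathcal{C}^{1,1})\oplus B^{2}(\mathcal{C}^{0,\bullet},\partial_{0,1}), \] \[ Z^{2}(\mathcal{C},\partial)\cong Z^{2}(\mathcal{N}_{0},\overline{\partial})\oplus\ker(\varrho_{2})\oplus\mathcal{Z}^{2}_{2}, \] \[ H^{2}(\mathcal{C},\partial)\cong\frac{Z^{2}(\mathcal{N}_{0},\overline{\partial})}{B^{2}(\mathcal{C},\partial)\cap\mathcal{C}^{2,0}}\oplus\frac{\ker(\varrho_{2})}{\mathcal{B}^{2}_{1}\cap\mathcal{C}^{1,1}}\oplus\frac{\mathcal{Z}^{2}_{2}}{B^{2}(\mathcal{C}^{0,\bullet},\partial_{0,1})}. \]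
   Context: Setting: $\mathcal{C}^{k}=\bigoplus_{p+q=k}\mathcal{C}^{p,q}$ with $\mathcal{C}^{p,q}=\{0\}$ if $p<0$ or $q<0$; $\partial$ is linear of degree $1$, $\partial^{2}=0$, $\partial=\partial_{2,-1}+\partial_{1,0}+\partial_{0,1}$ with $\partial_{i,j}(\mathcal{C}^{p,q})\subseteq\mathcal{C}^{p+i,q+j}$. For $\eta\in\mathcal{C}^k$, $\eta_{p,q}$ is its $\mathcal{C}^{p,q}$-component. $G^{q}\mathcal{C}:=\bigoplus_{j\geq q}\mathcal{C}^{i,j}$, $\pi_{q}:\mathcal{C}\to G^{q}\mathcal{C}$ the projection along the bigrading. $(\mathcal{C}^{0,\bullet},\partial_{0,1})$ is a cochain complex. $\mathcal{N}^{p,q}:=\ker(\partial_{0,1}|_{\mathcal{C}^{p,q}})\cap\ker(\partial_{2,-1}|_{\mathcal{C}^{p,q}})$, $\mathcal{N}_{q}:=\bigoplus_{p}\mathcal{N}^{p-q,q}$ (degree-$m$ part $\mathcal{N}^{m-q,q}$), a subcomplex with differential $\overline{\partial}:=\partial|_{\mathcal{N}_q}$. $\mathcal{M}^{k}:=\{\eta\in\mathcal{C}^{k}\mid(\partial\eta)_{i,j}\in B^{k+1}(\mathcal{N}_{j},\overline{\partial})\ \forall\, i+j=k+1\}$; $\mathcal{Z}^{k}_{q}:=\{\pi_{q}(\eta)\mid\eta\in\mathcal{M}^{k},\ \pi_{q}(\partial\eta)=0\}$; $\mathcal{B}^{k}_{q}:=\pi_{q}(B^{k}(\mathcal{C},\partial))$.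 $\mathcal{A}^{k}:=\{\pi_{1}(\eta)\mid\eta\in\mathcal{C}^{k},\ \pi_{1}(\partial\eta)=0\}$, $\mathcal{J}^{k}:=\mathcal{A}^{k}\cap\mathcal{C}^{k-1,1}$. For $\xi\in\mathcal{A}^{k}$ and any $\eta$ with $\pi_{1}\eta=\xi$, $\pi_{1}(\partial\eta)=0$, the class $[\partial_{2,-1}\xi_{k-1,1}+\partial_{1,0}\eta_{k,0}]\in H^{k+1}(\mathcal{N}_{0},\overline\partial)$ depends only on $\xi$, defining the linear map $\rho_{k}:\mathcal{A}^{k}\to H^{k+1}(\mathcal{N}_{0},\overline{\partial})$; $\varrho_{k}:=\rho_{k}|_{\mathcal{J}^{k}}$. *)

theory Defs
  imports Main "HOL.Vector_Spaces"
begin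

text \<open>The ambient type 'v is a vector space over the field 'f via the
scalar multiplication s.  The bigraded pieces are subspaces C p q of 'v
(indices p, q :: int), forming an (internal) direct sum.  The three
components of the differential are maps d21, d10, d01 on 'v.\<close>

definition tot :: "('v \<Rightarrow> 'v::ab_group_add) \<Rightarrow> ('v \<Rightarrow> 'v) \<Rightarrow> ('v \<Rightarrow> 'v) \<Rightarrow> 'v \<Rightarrow> 'v" where
  "tot d21 d10 d01 x = d21 x + d10 x + d01 x"

definition indep_family :: "(int \<Rightarrow> int \<Rightarrow> 'v::ab_group_add set) \<Rightarrow> bool" where
  "indep_family C \<longleftrightarrow>
     (\<forall>S x. finite S \<longrightarrow> (\<forall>(p,q)\<in>S. x (p,q) \<in> C p q) \<longrightarrow> sum x S = 0
        \<longrightarrow> (\<forall>i\<in>S. x i = 0))"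

definition Ck :: "('f::field \<Rightarrow> 'v \<Rightarrow> 'v::ab_group_add) \<Rightarrow> (int \<Rightarrow> int \<Rightarrow> 'v set) \<Rightarrow> int \<Rightarrow> 'v set" where
  "Ck s C k = module.span s (\<Union>{C p q | p q. p + q = k})"

definition comp :: "('f::field \<Rightarrow> 'v \<Rightarrow> 'v::ab_group_add) \<Rightarrow> (int \<Rightarrow> int \<Rightarrow> 'v set) \<Rightarrow> int \<Rightarrow> int \<Rightarrow> 'v \<Rightarrow> 'v" where
  "comp s C p q \<eta> = (THE x. x \<in> C p q \<and>
      \<eta> - x \<in> module.span s (\<Union>{C a b | a b. (a, b) \<noteq> (p, q)}))"

definition proj :: "('f::field \<Rightarrow> 'v \<Rightarrow> 'v::ab_group_add) \<Rightarrow> (int \<Rightarrow> int \<Rightarrow> 'v set) \<Rightarrow> int \<Rightarrow> 'v \<Rightarrow> 'v" where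
  "proj s C q \<eta> = (THE y. y \<in> module.span s (\<Union>{C i j | i j. q \<le> j}) \<and>
      \<eta> - y \<in> module.span s (\<Union>{C i j | i j. j < q}))"

definition Nsp :: "(int \<Rightarrow> int \<Rightarrow> 'v::ab_group_add set) \<Rightarrow> ('v \<Rightarrow> 'v) \<Rightarrow> ('v \<Rightarrow> 'v) \<Rightarrow> int \<Rightarrow> int \<Rightarrow> 'v set" where
  "Nsp C d21 d01 p q = {x \<in> C p q. d01 x = 0 \<and> d21 x = 0}"

text \<open>B^{m}(N_q, dbar) = dbar(N_q in degree m-1) = dd(N^{m-1-q,q}).\<close>
definition BN :: "(int \<Rightarrow> int \<Rightarrow> 'v::ab_group_add set) \<Rightarrow> ('v \<Rightarrow> 'v) \<Rightarrow> ('v \<Rightarrow> 'v) \<Rightarrow> ('v \<Rightarrow> 'v) \<Rightarrow> int \<Rightarrow> int \<Rightarrow> 'v set" where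
  "BN C d21 d10 d01 q m = tot d21 d10 d01 ` Nsp C d21 d01 (m - 1 - q) q"

definition ZN :: "(int \<Rightarrow> int \<Rightarrow> 'v::ab_group_add set) \<Rightarrow> ('v \<Rightarrow> 'v) \<Rightarrow> ('v \<Rightarrow> 'v) \<Rightarrow> ('v \<Rightarrow> 'v) \<Rightarrow> int \<Rightarrow> int \<Rightarrow> 'v set" where
  "ZN C d21 d10 d01 q m = {x \<in> Nsp C d21 d01 (m - q) q. tot d21 d10 d01 x = 0}"

definition Msp :: "('f::field \<Rightarrow> 'v \<Rightarrow> 'v::ab_group_add) \<Rightarrow> (int \<Rightarrow> int \<Rightarrow> 'v set) \<Rightarrow> ('v \<Rightarrow> 'v) \<Rightarrow> ('v \<Rightarrow> 'v) \<Rightarrow> ('v \<Rightarrow> 'v) \<Rightarrow> int \<Rightarrow> 'v set" where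
  "Msp s C d21 d10 d01 k = {\<eta> \<in> Ck s C k. \<forall>i j. i + j = k + 1 \<longrightarrow>
      comp s C i j (tot d21 d10 d01 \<eta>) \<in> BN C d21 d10 d01 j (k + 1)}"

definition Zcal :: "('f::field \<Rightarrow> 'v \<Rightarrow> 'v::ab_group_add) \<Rightarrow> (int \<Rightarrow> int \<Rightarrow> 'v set) \<Rightarrow> ('v \<Rightarrow> 'v) \<Rightarrow> ('v \<Rightarrow> 'v) \<Rightarrow> ('v \<Rightarrow> 'v) \<Rightarrow> int \<Rightarrow> int \<Rightarrow> 'v set" where
  "Zcal s C d21 d10 d01 k q = {proj s C q \<eta> | \<eta>. \<eta> \<in> Msp s C d21 d10 d01 k \<and>
      proj s C q (tot d21 d10 d01 \<eta>) = 0}"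

definition Bcal :: "('f::field \<Rightarrow> 'v \<Rightarrow> 'v::ab_group_add) \<Rightarrow> (int \<Rightarrow> int \<Rightarrow> 'v set) \<Rightarrow> ('v \<Rightarrow> 'v) \<Rightarrow> ('v \<Rightarrow> 'v) \<Rightarrow> ('v \<Rightarrow> 'v) \<Rightarrow> int \<Rightarrow> int \<Rightarrow> 'v set" where
  "Bcal s C d21 d10 d01 k q = proj s C q ` (tot d21 d10 d01 ` Ck s C (k - 1))"

definition Acal :: "('f::field \<Rightarrow> 'v \<Rightarrow> 'v::ab_group_add) \<Rightarrow> (int \<Rightarrow> int \<Rightarrow> 'v set) \<Rightarrow> ('v \<Rightarrow> 'v) \<Rightarrow> ('v \<Rightarrow> 'v) \<Rightarrow> ('v \<Rightarrow> 'v) \<Rightarrow> int \<Rightarrow> 'v set" where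
  "Acal s C d21 d10 d01 k = {proj s C 1 \<eta> | \<eta>. \<eta> \<in> Ck s C k \<and>
      proj s C 1 (tot d21 d10 d01 \<eta>) = 0}"

definition Jcal :: "('f::field \<Rightarrow> 'v \<Rightarrow> 'v::ab_group_add) \<Rightarrow> (int \<Rightarrow> int \<Rightarrow> 'v set) \<Rightarrow> ('v \<Rightarrow> 'v) \<Rightarrow> ('v \<Rightarrow> 'v) \<Rightarrow> ('v \<Rightarrow> 'v) \<Rightarrow> int \<Rightarrow> 'v set" where
  "Jcal s C d21 d10 d01 k = Acal s C d21 d10 d01 k \<inter> C (k - 1) 1"

text \<open>ker(varrho_k): those xi in J^k whose class
  [d21 xi_{k-1,1} + d10 eta_{k,0}] in H^{k+1}(N_0) vanishes, i.e. whose representative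
  lies in B^{k+1}(N_0, dbar), for a lift eta of xi as in the definition of rho_k
  (the class is independent of the lift, as stated in the context).\<close>
definition ker_varrho :: "('f::field \<Rightarrow> 'v \<Rightarrow> 'v::ab_group_add) \<Rightarrow> (int \<Rightarrow> int \<Rightarrow> 'v set) \<Rightarrow> ('v \<Rightarrow> 'v) \<Rightarrow> ('v \<Rightarrow> 'v) \<Rightarrow> ('v \<Rightarrow> 'v) \<Rightarrow> int \<Rightarrow> 'v set" where
  "ker_varrho s C d21 d10 d01 k = {\<xi> \<in> Jcal s C d21 d10 d01 k.
      \<exists>\<eta>. \<eta> \<in> Ck s C k \<and> proj s C 1 \<eta> = \<xi> \<and> proj s C 1 (tot d21 d10 d01 \<eta>) = 0 \<and>
        d21 (comp s C (k - 1) 1 \<xi>) + d10 (comp s C k 0 \<eta>) \<in> BN C d21 d10 d01 0 (k + 1)}"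

text \<open>Isomorphism of quotient spaces G/H \<cong> A/B (+) C/D (+) E/F (external direct sum):
  there is a linear map f from the external direct sum A (+) C (+) E into G which
  induces a linear bijection A/B (+) C/D (+) E/F \<rightarrow> G/H, i.e. f^{-1}(H) = B (+) D (+) F
  and f(A (+) C (+) E) + H = G.  (Every linear isomorphism of the quotients lifts to such
  an f, since G \<rightarrow> G/H has a linear section.)\<close>
definition quot_iso3 :: "('f::field \<Rightarrow> 'v \<Rightarrow> 'v::ab_group_add) \<Rightarrow> 'v set \<Rightarrow> 'v set \<Rightarrow> 'v set \<Rightarrow> 'v set
    \<Rightarrow> 'v set \<Rightarrow> 'v set \<Rightarrow> 'v set \<Rightarrow> 'v set \<Rightarrow> bool" where
  "quot_iso3 s G H A B C D E F \<longleftrightarrow>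
     (\<exists>f :: 'v \<Rightarrow> 'v \<Rightarrow> 'v \<Rightarrow> 'v.
        (\<forall>a\<in>A. \<forall>c\<in>C. \<forall>e\<in>E. f a c e \<in> G) \<and>
        (\<forall>a\<in>A. \<forall>c\<in>C. \<forall>e\<in>E. \<forall>a'\<in>A. \<forall>c'\<in>C. \<forall>e'\<in>E.
            f (a + a') (c + c') (e + e') = f a c e + f a' c' e') \<and>
        (\<forall>r. \<forall>a\<in>A. \<forall>c\<in>C. \<forall>e\<in>E. f (s r a) (s r c) (s r e) = s r (f a c e)) \<and>
        (\<forall>a\<in>A. \<forall>c\<in>C. \<forall>e\<in>E. f a c e \<in> H \<longleftrightarrow> a \<in> B \<and> c \<in> D \<and> e \<in> F) \<and>
        (\<forall>g\<in>G. \<exists>a\<in>A. \<exists>c\<in>C. \<exists>e\<in>E. g - f a c e \<in> H))"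

abbreviation lin_iso3 :: "('f::field \<Rightarrow> 'v \<Rightarrow> 'v::ab_group_add) \<Rightarrow> 'v set \<Rightarrow> 'v set \<Rightarrow> 'v set \<Rightarrow> 'v set \<Rightarrow> bool" where
  "lin_iso3 s G A C E \<equiv> quot_iso3 s G {0} A {0} C {0} E {0}"

end

theory Submission
  imports Defs
begin


context vector_space begin

lemma section_lemma:
  assumes V: "subspace V" and V': "subspace V'" "V' \<subseteq> V"
    and fadd: "\<And>x y. x \<in> V \<Longrightarrow> y \<in> V \<Longrightarrow> f (x + y) = f x + f y"
    and fsc: "\<And>c x. x \<in> V \<Longrightarrow> f (c *s x) = c *s f x"
  shows "\<exists>g. (\<forall>x y. g (x + y) = g x + g y) \<and> (\<forall>c x. g (c *s x) = c *s g x)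
     \<and> (\<forall>w\<in>f ` V. g w \<in> V \<and> f (g w) = w) \<and> (\<forall>w\<in>f ` V'. g w \<in> V')"
proof -
  have f0: "f 0 = 0" using fsc[of 0 0] V by (simp add: subspace_0)
  have "\<exists>B'. B' \<subseteq> f ` V' \<and> independent B' \<and> f ` V' \<subseteq> span B'"
    by (rule maximal_independent_subset_extend[of "{}" "f ` V'"]) (auto simp: independent_empty)
  then obtain B' where B': "B' \<subseteq> f ` V'" "independent B'" "f ` V' \<subseteq> span B'" by blast
  have "\<exists>B. B' \<subseteq> B \<and> B \<subseteq> f ` V \<and> independent B \<and> f ` V \<subseteq> span B"
    by (rule maximal_independent_subset_extend[of B' "f ` V"]) (use B' V' in blast)+
  then obtain B where B: "B' \<subseteq> B" "B \<subseteq> f ` V" "independent B" "f ` V \<subseteq> span B" by blast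
  define h where "h b = (if b \<in> B' then (SOME x. x \<in> V' \<and> f x = b) else (SOME x. x \<in> V \<and> f x = b))" for b
  have h: "h b \<in> V \<and> f (h b) = b" if "b \<in> B" for b
  proof (cases "b \<in> B'")
    case True
    then have "\<exists>x. x \<in> V' \<and> f x = b" using B' by auto
    then have "(SOME x. x \<in> V' \<and> f x = b) \<in> V' \<and> f (SOME x. x \<in> V' \<and> f x = b) = b" by (rule someI_ex)
    then show ?thesis using True V' unfolding h_def by auto
  next
    case False
    then have "\<exists>x. x \<in> V \<and> f x = b" using B that by auto
    then have "(SOME x. x \<in> V \<and> f x = b) \<in> V \<and> f (SOME x. x \<in> V \<and> f x = b) = b" by (rule someI_ex)
    then show ?thesis using False unfolding h_def by auto
  qed
  have h': "h b \<in> V'" if "b \<in> B'" for b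
  proof -
    have "\<exists>x. x \<in> V' \<and> f x = b" using B' that by auto
    then have "(SOME x. x \<in> V' \<and> f x = b) \<in> V' \<and> f (SOME x. x \<in> V' \<and> f x = b) = b" by (rule someI_ex)
    then show ?thesis using that unfolding h_def by auto
  qed
  interpret vp: vector_space_pair scale scale by unfold_locales
  define g where "g = vp.construct B h"
  have lg: "Vector_Spaces.linear scale scale g" unfolding g_def by (rule vp.linear_construct[OF B(3)])
  then have gadd: "\<And>x y. g (x + y) = g x + g y" and gsc: "\<And>c x. g (c *s x) = c *s g x"
    unfolding linear_iff by auto
  have gB: "g b = h b" if "b \<in> B" for b unfolding g_def by (rule vp.construct_basis[OF B(3) that])
  have g0: "g 0 = 0" using gsc[of 0 0] by simp
  have P1: "g w \<in> V \<and> f (g w) = w" if "w \<in> span B" for w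
    using that
  proof (induct rule: span_induct)
    case base
    show ?case unfolding subspace_def
      using V by (auto simp: g0 f0 gadd gsc fadd fsc subspace_0 subspace_add subspace_scale)
  next
    case (step x) then show ?case using h gB by auto
  qed
  have P2: "g w \<in> V'" if "w \<in> span B'" for w
    using that
  proof (induct rule: span_induct)
    case base
    show ?case unfolding subspace_def
      using V' by (auto simp: g0 gadd gsc subspace_0 subspace_add subspace_scale)
  next
    case (step x) then show ?case using h' gB B(1) by auto
  qed
  have "\<forall>w\<in>f ` V. g w \<in> V \<and> f (g w) = w" using P1 B(4) by blast
  moreover have "\<forall>w\<in>f ` V'. g w \<in> V'" using P2 B'(3) by blast
  ultimately show ?thesis using gadd gsc by blast
qed

end



locale bigr = vector_space s for s :: "'f::field \<Rightarrow> 'v::ab_group_add \<Rightarrow> 'v" +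
  fixes C :: "int \<Rightarrow> int \<Rightarrow> 'v set" and d21 d10 d01 :: "'v \<Rightarrow> 'v"
  assumes sub: "\<And>p q. subspace (C p q)"
    and zero: "\<And>p q. p < 0 \<or> q < 0 \<Longrightarrow> C p q = {0}"
    and dsum: "indep_family C"
    and lin: "Vector_Spaces.linear s s d21" "Vector_Spaces.linear s s d10" "Vector_Spaces.linear s s d01"
    and bideg: "\<And>p q x. x \<in> C p q \<Longrightarrow> d21 x \<in> C (p + 2) (q - 1)"
               "\<And>p q x. x \<in> C p q \<Longrightarrow> d10 x \<in> C (p + 1) q"
               "\<And>p q x. x \<in> C p q \<Longrightarrow> d01 x \<in> C p (q + 1)"
    and sq: "\<And>k x. x \<in> Ck s C k \<Longrightarrow> tot d21 d10 d01 (tot d21 d10 d01 x) = 0"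
begin

lemma set_eq_img: "{C a b | a b. P a b} = case_prod C ` Collect (case_prod P)"
  by auto

lemma span_fam: "span (\<Union> (case_prod C ` I)) =
   {sum x S | x S. finite S \<and> S \<subseteq> I \<and> (\<forall>i\<in>S. x i \<in> case_prod C i)}" (is "_ = ?R")
proof
  show "?R \<subseteq> span (\<Union> (case_prod C ` I))"
  proof
    fix y assume "y \<in> ?R"
    then obtain x S where "y = sum x S" "S \<subseteq> I" "\<forall>i\<in>S. x i \<in> case_prod C i" by auto
    moreover have "\<And>i. i \<in> S \<Longrightarrow> x i \<in> span (\<Union> (case_prod C ` I))"
      by (rule span_base) (use calculation in blast)
    ultimately show "y \<in> span (\<Union> (case_prod C ` I))"
      by (simp add: span_sum)
  qed
next
  have subR: "subspace ?R" unfolding subspace_def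
  proof (intro conjI ballI allI)
    show "0 \<in> ?R" by (rule CollectI, rule exI[of _ "\<lambda>_. 0"], rule exI[of _ "{}"]) auto
  next
    fix y1 y2 assume "y1 \<in> ?R" "y2 \<in> ?R"
    then obtain x S x' S' where 1: "y1 = sum x S" "finite S" "S \<subseteq> I" "\<forall>i\<in>S. x i \<in> case_prod C i"
      and 2: "y2 = sum x' S'" "finite S'" "S' \<subseteq> I" "\<forall>i\<in>S'. x' i \<in> case_prod C i" by auto
    define z where "z i = (if i \<in> S then x i else 0) + (if i \<in> S' then x' i else 0)" for i
    have "sum z (S \<union> S') = sum x ((S \<union> S') \<inter> S) + sum x' ((S \<union> S') \<inter> S')"
      unfolding z_def sum.distrib using 1 2 by (simp add: sum.inter_restrict[symmetric])
    also have "\<dots> = y1 + y2" using 1 2 by (simp add: Int_absorb1)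
    finally have "y1 + y2 = sum z (S \<union> S')" by simp
    moreover have "\<forall>i\<in>S \<union> S'. z i \<in> case_prod C i"
      unfolding z_def using 1 2 sub by (auto intro!: subspace_add simp: subspace_0 split: prod.splits)
    ultimately show "y1 + y2 \<in> ?R" using 1 2 by blast
  next
    fix c y assume "y \<in> ?R"
    then obtain x S where 1: "y = sum x S" "finite S" "S \<subseteq> I" "\<forall>i\<in>S. x i \<in> case_prod C i" by auto
    have "s c y = sum (\<lambda>i. s c (x i)) S" using 1 by (simp add: scale_sum_right)
    moreover have "\<forall>i\<in>S. s c (x i) \<in> case_prod C i"
      using 1 sub by (auto intro!: subspace_scale split: prod.splits)
    ultimately show "s c y \<in> ?R" using 1 by blast
  qed
  show "span (\<Union> (case_prod C ` I)) \<subseteq> ?R"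
  proof (rule span_minimal[OF _ subR])
    show "\<Union> (case_prod C ` I) \<subseteq> ?R"
    proof
      fix y assume "y \<in> \<Union> (case_prod C ` I)"
      then obtain i where "i \<in> I" "y \<in> case_prod C i" by auto
      then show "y \<in> ?R"
        by (intro CollectI exI[of _ "\<lambda>_. y"] exI[of _ "{i}"]) auto
    qed
  qed
qed

lemma indep: "finite S \<Longrightarrow> \<forall>i\<in>S. x i \<in> case_prod C i \<Longrightarrow> sum x S = 0 \<Longrightarrow> i \<in> S \<Longrightarrow> x i = 0"
  using dsum unfolding indep_family_def by (auto split: prod.splits)

lemma disjoint_span:
  assumes "I \<inter> J = {}" "z \<in> span (\<Union> (case_prod C ` I))" "z \<in> span (\<Union> (case_prod C ` J))"
  shows "z = 0"
proof -
  obtain x S where 1: "z = sum x S" "finite S" "S \<subseteq> I" "\<forall>i\<in>S. x i \<in> case_prod C i"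
    using assms(2) unfolding span_fam by auto
  obtain y T where 2: "z = sum y T" "finite T" "T \<subseteq> J" "\<forall>i\<in>T. y i \<in> case_prod C i"
    using assms(3) unfolding span_fam by auto
  have ST: "S \<inter> T = {}" using assms(1) 1 2 by auto
  define w where "w i = (if i \<in> S then x i else - y i)" for i
  have "sum w (S \<union> T) = sum w S + sum w T" using ST 1 2 by (simp add: sum.union_disjoint)
  also have "sum w S = sum x S" unfolding w_def by simp
  also have "sum w T = - sum y T" unfolding w_def using ST
    by (subst sum.cong[OF refl, of T _ "\<lambda>i. - y i"]) (auto simp: sum_negf)
  finally have "sum w (S \<union> T) = 0" using 1 2 by simp
  moreover have "\<forall>i\<in>S \<union> T. w i \<in> case_prod C i" unfolding w_def using 1 2 sub
    by (auto intro: subspace_neg split: prod.splits)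
  ultimately have "\<forall>i\<in>S. w i = 0" using 1 2 indep[of "S \<union> T" w] by auto
  then have "\<forall>i\<in>S. x i = 0" unfolding w_def by auto
  then show ?thesis using 1 by simp
qed

lemma comp_sum:
  assumes S: "finite S" "\<forall>i\<in>S. z i \<in> case_prod C i"
  shows "comp s C p q (sum z S) = (\<Sum>i\<in>S. if i = (p, q) then z i else 0)"
proof -
  define x0 where "x0 = (\<Sum>i\<in>S. if i = (p, q) then z i else 0)"
  have x0C: "x0 \<in> C p q" unfolding x0_def using S sub[of p q] by (auto simp: subspace_0)
  have "sum z S - x0 = sum z (S - {(p,q)})" unfolding x0_def using S
    by (auto simp: sum.remove)
  also have "\<dots> \<in> span (\<Union> (case_prod C ` {i. i \<noteq> (p,q)}))" unfolding span_fam using S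
    by (intro CollectI exI[of _ z] exI[of _ "S - {(p,q)}"]) auto
  finally have x0r: "sum z S - x0 \<in> span (\<Union> (case_prod C ` {i. i \<noteq> (p,q)}))" .
  have eqset: "\<Union>{C a b |a b. (a, b) \<noteq> (p, q)} = \<Union> (case_prod C ` {i. i \<noteq> (p,q)})"
    by (rule arg_cong[where f=Union]) force
  show ?thesis unfolding comp_def eqset x0_def[symmetric]
  proof (rule the_equality)
    show "x0 \<in> C p q \<and> sum z S - x0 \<in> span (\<Union> (case_prod C ` {i. i \<noteq> (p,q)}))"
      using x0C x0r by auto
  next
    fix x assume x: "x \<in> C p q \<and> sum z S - x \<in> span (\<Union> (case_prod C ` {i. i \<noteq> (p,q)}))"
    have "x - x0 \<in> C p q" using x x0C sub by (auto intro: subspace_diff)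
    then have a: "x - x0 \<in> span (\<Union> (case_prod C ` {(p,q)}))" by (auto intro: span_base)
    have "x - x0 = (sum z S - x0) - (sum z S - x)" by simp
    also have "\<dots> \<in> span (\<Union> (case_prod C ` {i. i \<noteq> (p,q)}))" by (rule span_diff) (use x x0r in auto)
    finally have "x - x0 = 0" using disjoint_span[of "{(p,q)}" "{i. i \<noteq> (p,q)}", OF _ a] by auto
    then show "x = x0" by simp
  qed
qed

lemma proj_sum:
  assumes S: "finite S" "\<forall>i\<in>S. z i \<in> case_prod C i"
  shows "proj s C q (sum z S) = (\<Sum>i\<in>S. if q \<le> snd i then z i else 0)"
proof -
  define y0 where "y0 = (\<Sum>i\<in>S. if q \<le> snd i then z i else 0)"
  let ?H = "span (\<Union> (case_prod C ` {(i, j). q \<le> j}))"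
  let ?L = "span (\<Union> (case_prod C ` {(i, j). j < q}))"
  have "y0 = sum z {i\<in>S. q \<le> snd i}" unfolding y0_def using S by (simp add: sum.inter_filter)
  also have "\<dots> \<in> ?H" unfolding span_fam using S
    by (intro CollectI exI[of _ z] exI[of _ "{i\<in>S. q \<le> snd i}"]) auto
  finally have y0H: "y0 \<in> ?H" .
  have "sum z S - y0 = (\<Sum>i\<in>S. if q \<le> snd i then 0 else z i)" unfolding y0_def
    by (auto simp: sum_subtractf[symmetric] intro!: sum.cong)
  also have "\<dots> = sum z {i\<in>S. \<not> q \<le> snd i}" using S by (simp add: sum.inter_filter) (intro sum.cong, auto)
  also have "\<dots> \<in> ?L" unfolding span_fam using S
    by (intro CollectI exI[of _ z] exI[of _ "{i\<in>S. \<not> q \<le> snd i}"]) auto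
  finally have y0L: "sum z S - y0 \<in> ?L" .
  have eq1: "\<Union>{C i j |i j. q \<le> j} = \<Union> (case_prod C ` {(i, j). q \<le> j})"
    by (rule arg_cong[where f=Union]) force
  have eq2: "\<Union>{C i j |i j. j < q} = \<Union> (case_prod C ` {(i, j). j < q})"
    by (rule arg_cong[where f=Union]) force
  show ?thesis unfolding proj_def eq1 eq2 y0_def[symmetric]
  proof (rule the_equality)
    show "y0 \<in> ?H \<and> sum z S - y0 \<in> ?L" using y0H y0L by (rule conjI)
  next
    fix y assume y: "y \<in> ?H \<and> sum z S - y \<in> ?L"
    have a: "y - y0 \<in> ?H" using span_diff[OF conjunct1[OF y] y0H] .
    have "y - y0 = (sum z S - y0) - (sum z S - y)" by simp
    also have "\<dots> \<in> ?L" using span_diff[OF y0L conjunct2[OF y]] .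
    finally have b: "y - y0 \<in> ?L" .
    have "{(i,j). q \<le> j} \<inter> {(i,j). j < q} = ({}::(int\<times>int) set)" by force
    from disjoint_span[OF this a b] have "y - y0 = 0" .
    then show "y = y0" by simp
  qed
qed

end



context bigr begin

lemma zC: "p < 0 \<or> q < 0 \<Longrightarrow> x \<in> C p q \<Longrightarrow> x = 0" using zero by auto

lemma C0: "0 \<in> C p q" using sub subspace_0 by blast

lemma Cadd: "x \<in> C p q \<Longrightarrow> y \<in> C p q \<Longrightarrow> x + y \<in> C p q" using sub subspace_add by blast
lemma Cdiff: "x \<in> C p q \<Longrightarrow> y \<in> C p q \<Longrightarrow> x - y \<in> C p q" using sub subspace_diff by blast
lemma Cscale: "x \<in> C p q \<Longrightarrow> s c x \<in> C p q" using sub subspace_scale by blast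

lemma l21: "d21 (x + y) = d21 x + d21 y" "d21 (s c x) = s c (d21 x)"
  using lin(1) unfolding linear_iff by auto
lemma l10: "d10 (x + y) = d10 x + d10 y" "d10 (s c x) = s c (d10 x)"
  using lin(2) unfolding linear_iff by auto
lemma l01: "d01 (x + y) = d01 x + d01 y" "d01 (s c x) = s c (d01 x)"
  using lin(3) unfolding linear_iff by auto

abbreviation "dd \<equiv> tot d21 d10 d01"

lemma dd_add: "dd (x + y) = dd x + dd y"
  unfolding tot_def l21 l10 l01 by (simp add: ac_simps)
lemma dd_scale: "dd (s c x) = s c (dd x)"
  unfolding tot_def l21 l10 l01 by (simp add: scale_right_distrib)
lemma dd_0: "dd 0 = 0" using dd_scale[of 0 0] by simp
lemma dd_neg: "dd (- x) = - dd x" using dd_scale[of "-1" x] by simp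
lemma dd_diff: "dd (x - y) = dd x - dd y" using dd_add[of x "- y"] dd_neg[of y] by simp
lemma d0: "d21 0 = 0" "d10 0 = 0" "d01 0 = 0"
  using l21(2)[of 0 0] l10(2)[of 0 0] l01(2)[of 0 0] by auto

lemma deg10: "a \<in> C 1 0 \<Longrightarrow> d10 a \<in> C 2 0 \<and> d01 a \<in> C 1 1 \<and> d21 a = 0"
  using bideg(1)[of a 1 0] bideg(2)[of a 1 0] bideg(3)[of a 1 0] zC[of 3 "-1"] by simp
lemma deg01: "b \<in> C 0 1 \<Longrightarrow> d21 b \<in> C 2 0 \<and> d10 b \<in> C 1 1 \<and> d01 b \<in> C 0 2"
  using bideg(1)[of b 0 1] bideg(2)[of b 0 1] bideg(3)[of b 0 1] by simp
lemma deg20: "u \<in> C 2 0 \<Longrightarrow> d21 u = 0 \<and> d10 u \<in> C 3 0 \<and> d01 u \<in> C 2 1"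
  using bideg(1)[of u 2 0] bideg(2)[of u 2 0] bideg(3)[of u 2 0] zC[of 4 "-1"] by simp
lemma deg11: "v \<in> C 1 1 \<Longrightarrow> d21 v \<in> C 3 0 \<and> d10 v \<in> C 2 1 \<and> d01 v \<in> C 1 2"
  using bideg(1)[of v 1 1] bideg(2)[of v 1 1] bideg(3)[of v 1 1] by simp
lemma deg02: "w \<in> C 0 2 \<Longrightarrow> d21 w \<in> C 2 1 \<and> d10 w \<in> C 1 2 \<and> d01 w \<in> C 0 3"
  using bideg(1)[of w 0 2] bideg(2)[of w 0 2] bideg(3)[of w 0 2] by simp

lemma comp0: "comp s C p q 0 = 0"
  using comp_sum[of "{}" "\<lambda>_. 0" p q] by simp
lemma proj0: "proj s C q 0 = 0"
  using proj_sum[of "{}" "\<lambda>_. 0" q] by simp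

lemma dec3:
  assumes "u \<in> C 2 0" "v \<in> C 1 1" "w \<in> C 0 2"
  shows "comp s C 2 0 (u + v + w) = u" "comp s C 1 1 (u + v + w) = v" "comp s C 0 2 (u + v + w) = w"
    "proj s C 1 (u + v + w) = v + w" "proj s C 2 (u + v + w) = w"
proof -
  define z where "z i = (if i = (2,0) then u else if i = (1,1) then v else w)" for i :: "int \<times> int"
  define S where "S = ({(2,0),(1,1),(0,2)} :: (int \<times> int) set)"
  have e: "u + v + w = sum z S" unfolding z_def S_def by (simp add: add.assoc)
  have zS: "finite S" "\<forall>i\<in>S. z i \<in> case_prod C i" unfolding z_def S_def using assms by auto
  show "comp s C 2 0 (u + v + w) = u" "comp s C 1 1 (u + v + w) = v" "comp s C 0 2 (u + v + w) = w"
    unfolding e comp_sum[OF zS] unfolding z_def S_def by simp_all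
  show "proj s C 1 (u + v + w) = v + w" "proj s C 2 (u + v + w) = w"
    unfolding e proj_sum[OF zS] unfolding z_def S_def by simp_all
qed

lemma dec3_0:
  assumes "u \<in> C 2 0" "v \<in> C 1 1" "w \<in> C 0 2" "u + v + w = 0"
  shows "u = 0" "v = 0" "w = 0"
  using dec3[OF assms(1-3)] assms(4) comp0 by metis+

lemma dec4:
  assumes "t30 \<in> C 3 0" "t21 \<in> C 2 1" "t12 \<in> C 1 2" "t03 \<in> C 0 3"
  shows "comp s C i j (t30 + t21 + t12 + t03) = (if (i,j) = (3,0) then t30 else 0)
      + (if (i,j) = (2,1) then t21 else 0) + (if (i,j) = (1,2) then t12 else 0) + (if (i,j) = (0,3) then t03 else 0)"
    "proj s C 1 (t30 + t21 + t12 + t03) = t21 + t12 + t03"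
    "proj s C 2 (t30 + t21 + t12 + t03) = t12 + t03"
proof -
  define z where "z i = (if i = (3,0) then t30 else if i = (2,1) then t21 else if i = (1,2) then t12 else t03)" for i :: "int \<times> int"
  define S where "S = ({(3,0),(2,1),(1,2),(0,3)} :: (int \<times> int) set)"
  have e: "t30 + t21 + t12 + t03 = sum z S" unfolding z_def S_def by (simp add: add.assoc)
  have zS: "finite S" "\<forall>i\<in>S. z i \<in> case_prod C i" unfolding z_def S_def using assms by auto
  show "comp s C i j (t30 + t21 + t12 + t03) = (if (i,j) = (3,0) then t30 else 0)
      + (if (i,j) = (2,1) then t21 else 0) + (if (i,j) = (1,2) then t12 else 0) + (if (i,j) = (0,3) then t03 else 0)"
    unfolding e comp_sum[OF zS] unfolding z_def S_def by (auto simp: add.assoc)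
  show "proj s C 1 (t30 + t21 + t12 + t03) = t21 + t12 + t03" "proj s C 2 (t30 + t21 + t12 + t03) = t12 + t03"
    unfolding e proj_sum[OF zS] unfolding z_def S_def by (simp_all add: add.assoc)
qed

lemma dec4_0:
  assumes "t30 \<in> C 3 0" "t21 \<in> C 2 1" "t12 \<in> C 1 2" "t03 \<in> C 0 3" "t30 + t21 + t12 + t03 = 0"
  shows "t30 = 0" "t21 = 0" "t12 = 0" "t03 = 0"
  using dec4(1)[OF assms(1-4), of 3 0] dec4(1)[OF assms(1-4), of 2 1]
    dec4(1)[OF assms(1-4), of 1 2] dec4(1)[OF assms(1-4), of 0 3] assms(5) comp0 by auto

lemma spanC: "span (C p q) = C p q" using sub[of p q] by simp

lemma Ck1: "Ck s C 1 = {a + b | a b. a \<in> C 1 0 \<and> b \<in> C 0 1}"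
proof -
  have U: "\<Union>{C p q |p q. p + q = 1} = C 1 0 \<union> C 0 1"
  proof
    show "\<Union>{C p q |p q. p + q = 1} \<subseteq> C 1 0 \<union> C 0 1"
    proof
      fix x assume "x \<in> \<Union>{C p q |p q. p + q = 1}"
      then obtain p q where pq: "p + q = 1" "x \<in> C p q" by auto
      show "x \<in> C 1 0 \<union> C 0 1"
      proof (cases "p = 1 \<or> p = 0")
        case True then show ?thesis using pq by auto
      next
        case False then have "p < 0 \<or> q < 0" using pq by auto
        then show ?thesis using zC pq C0 by blast
      qed
    qed
  next
    show "C 1 0 \<union> C 0 1 \<subseteq> \<Union>{C p q |p q. p + q = 1}" by force
  qed
  show ?thesis unfolding Ck_def U span_Un
    by (simp add: spanC)
qed

lemma Ck2: "Ck s C 2 = {u + v + w | u v w. u \<in> C 2 0 \<and> v \<in> C 1 1 \<and> w \<in> C 0 2}"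
proof -
  have U: "\<Union>{C p q |p q. p + q = 2} = C 2 0 \<union> (C 1 1 \<union> C 0 2)"
  proof
    show "\<Union>{C p q |p q. p + q = 2} \<subseteq> C 2 0 \<union> (C 1 1 \<union> C 0 2)"
    proof
      fix x assume "x \<in> \<Union>{C p q |p q. p + q = 2}"
      then obtain p q where pq: "p + q = 2" "x \<in> C p q" by auto
      show "x \<in> C 2 0 \<union> (C 1 1 \<union> C 0 2)"
      proof (cases "p = 2 \<or> p = 1 \<or> p = 0")
        case True then show ?thesis using pq by auto
      next
        case False then have "p < 0 \<or> q < 0" using pq by auto
        then show ?thesis using zC pq C0 by blast
      qed
    qed
  next
    show "C 2 0 \<union> (C 1 1 \<union> C 0 2) \<subseteq> \<Union>{C p q |p q. p + q = 2}" by force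
  qed
  have "Ck s C 2 = {x + y |x y. x \<in> C 2 0 \<and> y \<in> {a + b |a b. a \<in> C 1 1 \<and> b \<in> C 0 2}}"
    unfolding Ck_def U span_Un
    by (simp add: spanC)
  also have "\<dots> = {u + v + w | u v w. u \<in> C 2 0 \<and> v \<in> C 1 1 \<and> w \<in> C 0 2}"
    by (auto simp: add.assoc)
  finally show ?thesis .
qed

lemma Ck1E: assumes "x \<in> Ck s C 1" obtains a b where "a \<in> C 1 0" "b \<in> C 0 1" "x = a + b"
  using assms unfolding Ck1 by auto
lemma Ck2E: assumes "x \<in> Ck s C 2" obtains u v w where "u \<in> C 2 0" "v \<in> C 1 1" "w \<in> C 0 2" "x = u + v + w"
  using assms unfolding Ck2 by auto
lemma Ck2I: "u \<in> C 2 0 \<Longrightarrow> v \<in> C 1 1 \<Longrightarrow> w \<in> C 0 2 \<Longrightarrow> u + v + w \<in> Ck s C 2"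
  unfolding Ck2 by auto
lemma Ck1I: "a \<in> C 1 0 \<Longrightarrow> b \<in> C 0 1 \<Longrightarrow> a + b \<in> Ck s C 1"
  unfolding Ck1 by auto

lemma subCk: "subspace (Ck s C k)" unfolding Ck_def by simp

lemma dd1: assumes "a \<in> C 1 0" "b \<in> C 0 1"
  shows "dd (a + b) = (d10 a + d21 b) + (d01 a + d10 b) + d01 b"
  using deg10[OF assms(1)] unfolding tot_def l21 l10 l01 by (simp add: ac_simps)

lemma dd2: assumes "u \<in> C 2 0" "v \<in> C 1 1" "w \<in> C 0 2"
  shows "dd (u + v + w) = (d10 u + d21 v) + (d01 u + d10 v + d21 w) + (d01 v + d10 w) + d01 w"
  using deg20[OF assms(1)] unfolding tot_def l21 l10 l01 by (simp add: ac_simps)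

end



context bigr begin

abbreviation "Z2 \<equiv> {x \<in> Ck s C 2. dd x = 0}"
abbreviation "B2 \<equiv> dd ` Ck s C 1"
abbreviation "V2 \<equiv> {x \<in> Z2. comp s C 0 2 x = 0}"
abbreviation "V2' \<equiv> {x \<in> B2. comp s C 0 2 x = 0}"

lemma c_add: assumes "x \<in> Ck s C 2" "y \<in> Ck s C 2"
  shows "comp s C 0 2 (x + y) = comp s C 0 2 x + comp s C 0 2 y"
    "comp s C 1 1 (x + y) = comp s C 1 1 x + comp s C 1 1 y"
proof -
  obtain u v w where x: "u \<in> C 2 0" "v \<in> C 1 1" "w \<in> C 0 2" "x = u + v + w" using assms(1) by (rule Ck2E)
  obtain u' v' w' where y: "u' \<in> C 2 0" "v' \<in> C 1 1" "w' \<in> C 0 2" "y = u' + v' + w'" using assms(2) by (rule Ck2E)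
  have e: "x + y = (u + u') + (v + v') + (w + w')" using x y by (simp add: ac_simps)
  have m: "u + u' \<in> C 2 0" "v + v' \<in> C 1 1" "w + w' \<in> C 0 2" using x y Cadd by auto
  show "comp s C 0 2 (x + y) = comp s C 0 2 x + comp s C 0 2 y"
    "comp s C 1 1 (x + y) = comp s C 1 1 x + comp s C 1 1 y"
    unfolding e dec3(2,3)[OF m] unfolding x(4) y(4) dec3(2,3)[OF x(1-3)] dec3(2,3)[OF y(1-3)] by simp_all
qed

lemma c_scale: assumes "x \<in> Ck s C 2"
  shows "comp s C 0 2 (s c x) = s c (comp s C 0 2 x)" "comp s C 1 1 (s c x) = s c (comp s C 1 1 x)"
proof -
  obtain u v w where x: "u \<in> C 2 0" "v \<in> C 1 1" "w \<in> C 0 2" "x = u + v + w" using assms(1) by (rule Ck2E)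
  have e: "s c x = s c u + s c v + s c w" using x by (simp add: scale_right_distrib)
  have m: "s c u \<in> C 2 0" "s c v \<in> C 1 1" "s c w \<in> C 0 2" using x Cscale by auto
  show "comp s C 0 2 (s c x) = s c (comp s C 0 2 x)" "comp s C 1 1 (s c x) = s c (comp s C 1 1 x)"
    unfolding e dec3(2,3)[OF m] unfolding x(4) dec3(2,3)[OF x(1-3)] by simp_all
qed

lemma c_diff: assumes "x \<in> Ck s C 2" "y \<in> Ck s C 2"
  shows "comp s C 0 2 (x - y) = comp s C 0 2 x - comp s C 0 2 y"
    "comp s C 1 1 (x - y) = comp s C 1 1 x - comp s C 1 1 y"
proof -
  have "x - y \<in> Ck s C 2" using assms subCk subspace_diff by blast
  then show "comp s C 0 2 (x - y) = comp s C 0 2 x - comp s C 0 2 y"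
    "comp s C 1 1 (x - y) = comp s C 1 1 x - comp s C 1 1 y"
    using c_add[of "x - y" y] assms by (simp_all add: eq_diff_eq)
qed

lemma subZ2: "subspace Z2"
  unfolding subspace_def
proof (intro conjI ballI allI)
  show "0 \<in> Z2" using dd_0 subspace_0[OF subCk[of 2]] by blast
next
  fix x y assume x: "x \<in> Z2" and y: "y \<in> Z2"
  have "x + y \<in> Ck s C 2" using subspace_add[OF subCk[of 2]] x y by blast
  moreover have "dd (x + y) = 0" using x y dd_add[of x y] by simp
  ultimately show "x + y \<in> Z2" by blast
next
  fix c x assume x: "x \<in> Z2"
  have "s c x \<in> Ck s C 2" using subspace_scale[OF subCk[of 2]] x by blast
  moreover have "dd (s c x) = 0" using x dd_scale[of c x] by simp
  ultimately show "s c x \<in> Z2" by blast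
qed

lemma subB2: "subspace B2"
  unfolding subspace_def
proof (intro conjI ballI allI)
  show "0 \<in> B2" using image_eqI[of 0 dd 0, OF dd_0[symmetric] subspace_0[OF subCk[of 1]]] .
next
  fix x y assume x: "x \<in> B2" and y: "y \<in> B2"
  then obtain \<beta> \<gamma> where b: "\<beta> \<in> Ck s C 1" "x = dd \<beta>" "\<gamma> \<in> Ck s C 1" "y = dd \<gamma>" by blast
  have "\<beta> + \<gamma> \<in> Ck s C 1" using subspace_add[OF subCk[of 1] b(1) b(3)] .
  moreover have "x + y = dd (\<beta> + \<gamma>)" using b dd_add by simp
  ultimately show "x + y \<in> B2" by blast
next
  fix c x assume x: "x \<in> B2"
  then obtain \<beta> where b: "\<beta> \<in> Ck s C 1" "x = dd \<beta>" by blast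
  have "s c \<beta> \<in> Ck s C 1" using subspace_scale[OF subCk[of 1] b(1)] .
  moreover have "s c x = dd (s c \<beta>)" using b dd_scale by simp
  ultimately show "s c x \<in> B2" by blast
qed

lemma B2Z2: "x \<in> B2 \<Longrightarrow> x \<in> Z2"
proof -
  assume "x \<in> B2"
  then obtain \<beta> where b: "\<beta> \<in> Ck s C 1" "x = dd \<beta>" by auto
  obtain a b where ab: "a \<in> C 1 0" "b \<in> C 0 1" "\<beta> = a + b" by (rule Ck1E[OF b(1)])
  have "x \<in> Ck s C 2" unfolding b ab dd1[OF ab(1,2)]
    using deg10[OF ab(1)] deg01[OF ab(2)] by (intro Ck2I Cadd) auto
  moreover have "dd x = 0" using b sq by auto
  ultimately show "x \<in> Z2" by auto
qed

lemma subV_gen: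
  assumes "subspace W" "W \<subseteq> Ck s C 2"
  shows "subspace {x \<in> W. comp s C 0 2 x = 0}"
  unfolding subspace_def
proof (intro conjI ballI allI)
  show "0 \<in> {x \<in> W. comp s C 0 2 x = 0}" using assms(1) comp0 subspace_0 by blast
next
  fix x y assume xy: "x \<in> {x \<in> W. comp s C 0 2 x = 0}" "y \<in> {x \<in> W. comp s C 0 2 x = 0}"
  then have "comp s C 0 2 (x + y) = 0" using c_add(1)[of x y] assms(2) by auto
  then show "x + y \<in> {x \<in> W. comp s C 0 2 x = 0}" using xy subspace_add[OF assms(1)] by simp
next
  fix c x assume x: "x \<in> {x \<in> W. comp s C 0 2 x = 0}"
  then have "comp s C 0 2 (s c x) = 0" using c_scale(1)[of x c] assms(2) by auto
  then show "s c x \<in> {x \<in> W. comp s C 0 2 x = 0}" using x subspace_scale[OF assms(1)] by simp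
qed

lemma subV2: "subspace V2"
  using subV_gen[OF subZ2] by blast

lemma subV2': "subspace V2'"
  using subV_gen[OF subB2] B2Z2 by blast

lemma zero_in_BN: "0 \<in> BN C d21 d10 d01 j m"
  unfolding BN_def Nsp_def using C0 d0 dd_0 by (metis (mono_tags, lifting) image_eqI mem_Collect_eq)

lemma F5: "ZN C d21 d10 d01 0 2 = Z2 \<inter> C 2 0"
proof
  show "ZN C d21 d10 d01 0 2 \<subseteq> Z2 \<inter> C 2 0"
    unfolding ZN_def Nsp_def using Ck2I[of _ 0 0] C0 by fastforce
next
  show "Z2 \<inter> C 2 0 \<subseteq> ZN C d21 d10 d01 0 2"
  proof
    fix x assume x: "x \<in> Z2 \<inter> C 2 0"
    have dg: "d21 x = 0" "d10 x \<in> C 3 0" "d01 x \<in> C 2 1" using deg20 x by auto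
    have "d10 x + d01 x + 0 + 0 = 0" using x dg unfolding tot_def by simp
    then have "d01 x = 0" using dec4_0(2)[OF dg(2,3) C0 C0] by simp
    then show "x \<in> ZN C d21 d10 d01 0 2" unfolding ZN_def Nsp_def using x dg by auto
  qed
qed

lemma F2: "comp s C 0 2 ` B2 = d01 ` C 0 1"
proof
  show "comp s C 0 2 ` B2 \<subseteq> d01 ` C 0 1"
  proof
    fix y assume "y \<in> comp s C 0 2 ` B2"
    then obtain \<beta> where b: "\<beta> \<in> Ck s C 1" "y = comp s C 0 2 (dd \<beta>)" by auto
    obtain a b where ab: "a \<in> C 1 0" "b \<in> C 0 1" "\<beta> = a + b" by (rule Ck1E[OF b(1)])
    have "y = d01 b" unfolding b ab dd1[OF ab(1,2)]
      using deg10[OF ab(1)] deg01[OF ab(2)] by (intro dec3 Cadd) auto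
    then show "y \<in> d01 ` C 0 1" using ab by auto
  qed
next
  show "d01 ` C 0 1 \<subseteq> comp s C 0 2 ` B2"
  proof
    fix y assume "y \<in> d01 ` C 0 1"
    then obtain b where b: "b \<in> C 0 1" "y = d01 b" by auto
    have "comp s C 0 2 (dd (0 + b)) = d01 b" unfolding dd1[OF C0 b(1)]
      using deg10[OF C0] deg01[OF b(1)] by (intro dec3 Cadd) auto
    moreover have "0 + b \<in> Ck s C 1" using Ck1I[OF C0 b(1)] .
    ultimately show "y \<in> comp s C 0 2 ` B2" using b by (metis image_eqI)
  qed
qed

lemma F4: "comp s C 1 1 ` V2' = Bcal s C d21 d10 d01 2 1 \<inter> C 1 1"
proof
  show "comp s C 1 1 ` V2' \<subseteq> Bcal s C d21 d10 d01 2 1 \<inter> C 1 1"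
  proof
    fix y assume "y \<in> comp s C 1 1 ` V2'"
    then obtain \<beta> where b: "\<beta> \<in> Ck s C 1" "comp s C 0 2 (dd \<beta>) = 0" "y = comp s C 1 1 (dd \<beta>)" by auto
    obtain a b where ab: "a \<in> C 1 0" "b \<in> C 0 1" "\<beta> = a + b" by (rule Ck1E[OF b(1)])
    have m: "d10 a + d21 b \<in> C 2 0" "d01 a + d10 b \<in> C 1 1" "d01 b \<in> C 0 2"
      using deg10[OF ab(1)] deg01[OF ab(2)] by (auto intro: Cadd)
    have "d01 b = 0" using b(2) unfolding ab dd1[OF ab(1,2)] dec3(3)[OF m] .
    moreover have "y = d01 a + d10 b" using b(3) unfolding ab dd1[OF ab(1,2)] dec3(2)[OF m] .
    moreover have "proj s C 1 (dd \<beta>) = d01 a + d10 b + d01 b" unfolding ab dd1[OF ab(1,2)] dec3(4)[OF m] ..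
    ultimately have "y = proj s C 1 (dd \<beta>)" "y \<in> C 1 1" using m by auto
    then show "y \<in> Bcal s C d21 d10 d01 2 1 \<inter> C 1 1" unfolding Bcal_def using b(1) by auto
  qed
next
  show "Bcal s C d21 d10 d01 2 1 \<inter> C 1 1 \<subseteq> comp s C 1 1 ` V2'"
  proof
    fix y assume y: "y \<in> Bcal s C d21 d10 d01 2 1 \<inter> C 1 1"
    then obtain \<beta> where b: "\<beta> \<in> Ck s C 1" "y = proj s C 1 (dd \<beta>)" unfolding Bcal_def by auto
    obtain a b where ab: "a \<in> C 1 0" "b \<in> C 0 1" "\<beta> = a + b" by (rule Ck1E[OF b(1)])
    have m: "d10 a + d21 b \<in> C 2 0" "d01 a + d10 b \<in> C 1 1" "d01 b \<in> C 0 2"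
      using deg10[OF ab(1)] deg01[OF ab(2)] by (auto intro: Cadd)
    have yy: "y = d01 a + d10 b + d01 b" using b(2) unfolding ab dd1[OF ab(1,2)] dec3(4)[OF m] .
    have "0 + y + 0 = 0 + (d01 a + d10 b) + d01 b" using yy by (simp add: add.assoc)
    then have "comp s C 0 2 (0 + y + 0) = comp s C 0 2 (0 + (d01 a + d10 b) + d01 b)" by simp
    then have b0: "d01 b = 0" using dec3(3)[OF C0 _ C0, of y] dec3(3)[OF C0 m(2,3)] y by simp
    have c02: "comp s C 0 2 (dd \<beta>) = 0" unfolding ab dd1[OF ab(1,2)] dec3(3)[OF m] by (rule b0)
    have c11: "comp s C 1 1 (dd \<beta>) = y" unfolding ab dd1[OF ab(1,2)] dec3(2)[OF m] using yy b0 by simp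
    show "y \<in> comp s C 1 1 ` V2'" using c02 c11 b(1) by (metis (mono_tags, lifting) image_eqI mem_Collect_eq)
  qed
qed

end



context bigr begin

lemma Tfacts:
  assumes uvw: "u \<in> C 2 0" "v \<in> C 1 1" "w \<in> C 0 2"
  shows "d10 u + d21 v \<in> C 3 0" "d01 u + d10 v + d21 w \<in> C 2 1" "d01 v + d10 w \<in> C 1 2" "d01 w \<in> C 0 3"
  using deg20[OF uvw(1)] deg11[OF uvw(2)] deg02[OF uvw(3)] by (auto intro!: Cadd)

lemma F1: "comp s C 0 2 ` Z2 = Zcal s C d21 d10 d01 2 2"
proof
  show "comp s C 0 2 ` Z2 \<subseteq> Zcal s C d21 d10 d01 2 2"
  proof
    fix y assume "y \<in> comp s C 0 2 ` Z2"
    then obtain x where x: "x \<in> Ck s C 2" "dd x = 0" "y = comp s C 0 2 x" by blast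
    obtain u v w where uvw: "u \<in> C 2 0" "v \<in> C 1 1" "w \<in> C 0 2" "x = u + v + w" by (rule Ck2E[OF x(1)])
    have py: "proj s C 2 x = y" unfolding x(3) uvw(4) dec3(3,5)[OF uvw(1-3)] ..
    have "x \<in> Msp s C d21 d10 d01 2" unfolding Msp_def using x(1,2) comp0 zero_in_BN by simp
    moreover have "proj s C 2 (dd x) = 0" using x(2) proj0 by simp
    ultimately show "y \<in> Zcal s C d21 d10 d01 2 2" unfolding Zcal_def using py by blast
  qed
next
  show "Zcal s C d21 d10 d01 2 2 \<subseteq> comp s C 0 2 ` Z2"
  proof
    fix y assume "y \<in> Zcal s C d21 d10 d01 2 2"
    then obtain \<eta> where e: "\<eta> \<in> Msp s C d21 d10 d01 2" "proj s C 2 (dd \<eta>) = 0" "y = proj s C 2 \<eta>"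
      unfolding Zcal_def by blast
    have eC: "\<eta> \<in> Ck s C 2" and eM: "\<And>i j. i + j = 3 \<Longrightarrow> comp s C i j (dd \<eta>) \<in> BN C d21 d10 d01 j 3"
      using e(1) unfolding Msp_def by auto
    obtain u v w where uvw: "u \<in> C 2 0" "v \<in> C 1 1" "w \<in> C 0 2" "\<eta> = u + v + w" by (rule Ck2E[OF eC])
    note T = Tfacts[OF uvw(1-3)]
    have dde: "dd \<eta> = (d10 u + d21 v) + (d01 u + d10 v + d21 w) + (d01 v + d10 w) + d01 w"
      unfolding uvw(4) dd2[OF uvw(1-3)] ..
    have "(d01 v + d10 w) + d01 w = 0" using e(2) unfolding dde dec4(3)[OF T] .
    then have "0 + 0 + (d01 v + d10 w) + d01 w = 0" by simp
    then have z: "d01 v + d10 w = 0" "d01 w = 0" using dec4_0[OF C0 C0 T(3,4)] by auto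
    have "comp s C 3 0 (dd \<eta>) \<in> BN C d21 d10 d01 0 3" using eM[of 3 0] by simp
    then have "d10 u + d21 v \<in> BN C d21 d10 d01 0 3" unfolding dde dec4(1)[OF T] by simp
    then obtain n0 where n0: "n0 \<in> C 2 0" "d10 u + d21 v = dd n0" unfolding BN_def Nsp_def by auto
    have "comp s C 2 1 (dd \<eta>) \<in> BN C d21 d10 d01 1 3" using eM[of 2 1] by simp
    then have "d01 u + d10 v + d21 w \<in> BN C d21 d10 d01 1 3" unfolding dde dec4(1)[OF T] by simp
    then obtain n1 where n1: "n1 \<in> C 1 1" "d01 u + d10 v + d21 w = dd n1" unfolding BN_def Nsp_def by auto
    define x where "x = (u - n0) + (v - n1) + w"
    have m: "u - n0 \<in> C 2 0" "v - n1 \<in> C 1 1" using uvw n0 n1 Cdiff by auto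
    have xC: "x \<in> Ck s C 2" unfolding x_def using Ck2I[OF m uvw(3)] .
    have "x = \<eta> - n0 - n1" unfolding x_def uvw(4) by (simp add: algebra_simps)
    then have "dd x = dd \<eta> - dd n0 - dd n1" by (simp add: dd_diff)
    also have "\<dots> = 0" unfolding dde z using n0 n1 by simp
    finally have "x \<in> Z2" using xC by blast
    moreover have "comp s C 0 2 x = y" unfolding x_def dec3(3)[OF m uvw(3)] e(3) uvw(4) dec3(5)[OF uvw(1-3)] ..
    ultimately show "y \<in> comp s C 0 2 ` Z2" by blast
  qed
qed

lemma F3: "comp s C 1 1 ` V2 = ker_varrho s C d21 d10 d01 2"
proof
  show "comp s C 1 1 ` V2 \<subseteq> ker_varrho s C d21 d10 d01 2"
  proof
    fix y assume "y \<in> comp s C 1 1 ` V2"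
    then obtain x where x: "x \<in> Ck s C 2" "dd x = 0" "comp s C 0 2 x = 0" "y = comp s C 1 1 x" by blast
    obtain u v w where uvw: "u \<in> C 2 0" "v \<in> C 1 1" "w \<in> C 0 2" "x = u + v + w" by (rule Ck2E[OF x(1)])
    note T = Tfacts[OF uvw(1-3)]
    have w0: "w = 0" using x(3) unfolding uvw(4) dec3(3)[OF uvw(1-3)] .
    have yv: "y = v" using x(4) unfolding uvw(4) dec3(2)[OF uvw(1-3)] .
    have "proj s C 1 x = v + w" unfolding uvw(4) by (rule dec3(4)[OF uvw(1-3)])
    then have p1: "proj s C 1 x = y" using w0 yv by simp
    have dde: "dd x = (d10 u + d21 v) + (d01 u + d10 v + d21 w) + (d01 v + d10 w) + d01 w"
      unfolding uvw(4) dd2[OF uvw(1-3)] ..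
    have t30: "d10 u + d21 v = 0" using dec4_0(1)[OF T] x(2) unfolding dde by simp
    have cy: "comp s C (2 - 1) 1 y = v" using dec3(2)[OF C0 uvw(2) C0] yv by simp
    have cu: "comp s C 2 0 x = u" unfolding uvw(4) dec3(1)[OF uvw(1-3)] ..
    have "d21 (comp s C (2 - 1) 1 y) + d10 (comp s C 2 0 x) = 0" unfolding cy cu using t30 by (simp add: add.commute)
    then have bn: "d21 (comp s C (2 - 1) 1 y) + d10 (comp s C 2 0 x) \<in> BN C d21 d10 d01 0 (2 + 1)"
      using zero_in_BN by simp
    have pd: "proj s C 1 (dd x) = 0" using x(2) proj0 by simp
    have "y \<in> Acal s C d21 d10 d01 2" unfolding Acal_def using x(1) p1 pd by blast
    moreover have "y \<in> C (2 - 1) 1" using uvw(2) yv by simp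
    ultimately have "y \<in> Jcal s C d21 d10 d01 2" unfolding Jcal_def by blast
    then show "y \<in> ker_varrho s C d21 d10 d01 2" unfolding ker_varrho_def using x(1) p1 pd bn by blast
  qed
next
  show "ker_varrho s C d21 d10 d01 2 \<subseteq> comp s C 1 1 ` V2"
  proof
    fix y assume y: "y \<in> ker_varrho s C d21 d10 d01 2"
    then have yC: "y \<in> C 1 1" unfolding ker_varrho_def Jcal_def by auto
    from y obtain \<eta> where e: "\<eta> \<in> Ck s C 2" "proj s C 1 \<eta> = y" "proj s C 1 (dd \<eta>) = 0"
      "d21 (comp s C (2 - 1) 1 y) + d10 (comp s C 2 0 \<eta>) \<in> BN C d21 d10 d01 0 (2 + 1)"
      unfolding ker_varrho_def by blast
    obtain u v w where uvw: "u \<in> C 2 0" "v \<in> C 1 1" "w \<in> C 0 2" "\<eta> = u + v + w" by (rule Ck2E[OF e(1)])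
    note T = Tfacts[OF uvw(1-3)]
    have yvw: "y = v + w" using e(2) unfolding uvw(4) dec3(4)[OF uvw(1-3)] by simp
    have eq: "0 + y + 0 = 0 + v + w" using yvw by (simp add: add.assoc)
    have w0: "w = 0" using dec3(3)[OF C0 yC C0] dec3(3)[OF C0 uvw(2,3)] eq by simp
    have yv: "y = v" using yvw w0 by simp
    have cy: "comp s C (2 - 1) 1 y = v" using dec3(2)[OF C0 uvw(2) C0] yv by simp
    have cu: "comp s C 2 0 \<eta> = u" unfolding uvw(4) dec3(1)[OF uvw(1-3)] ..
    have dde: "dd \<eta> = (d10 u + d21 v) + (d01 u + d10 v + d21 w) + (d01 v + d10 w) + d01 w"
      unfolding uvw(4) dd2[OF uvw(1-3)] ..
    have "(d01 u + d10 v + d21 w) + (d01 v + d10 w) + d01 w = 0" using e(3) unfolding dde dec4(2)[OF T] .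
    then have "0 + (d01 u + d10 v + d21 w) + (d01 v + d10 w) + d01 w = 0" by simp
    then have z: "d01 u + d10 v + d21 w = 0" "d01 v + d10 w = 0" "d01 w = 0"
      using dec4_0[OF C0 T(2-4)] by auto
    have "d10 u + d21 v \<in> BN C d21 d10 d01 0 3" using e(4) unfolding cy cu by (simp add: add.commute)
    then obtain n0 where n0: "n0 \<in> C 2 0" "d10 u + d21 v = dd n0" unfolding BN_def Nsp_def by auto
    define x where "x = (u - n0) + v + w"
    have m: "u - n0 \<in> C 2 0" using uvw n0 Cdiff by auto
    have xC: "x \<in> Ck s C 2" unfolding x_def using Ck2I[OF m uvw(2,3)] .
    have "x = \<eta> - n0" unfolding x_def uvw(4) by (simp add: algebra_simps)
    then have "dd x = dd \<eta> - dd n0" by (simp add: dd_diff)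
    also have "\<dots> = 0" unfolding dde z using n0 by simp
    finally have "dd x = 0" .
    moreover have "comp s C 0 2 x = 0" using dec3(3)[OF m uvw(2,3)] w0 unfolding x_def by simp
    moreover have "comp s C 1 1 x = y" using dec3(2)[OF m uvw(2,3)] yv unfolding x_def by simp
    ultimately show "y \<in> comp s C 1 1 ` V2" using xC by blast
  qed
qed

end



context bigr begin

lemma main:
  "lin_iso3 s (tot d21 d10 d01 ` Ck s C 1)
        (tot d21 d10 d01 ` Ck s C 1 \<inter> C 2 0)
        (Bcal s C d21 d10 d01 2 1 \<inter> C 1 1)
        (d01 ` C 0 1)
   \<and> lin_iso3 s {x \<in> Ck s C 2. tot d21 d10 d01 x = 0}
        (ZN C d21 d10 d01 0 2)
        (ker_varrho s C d21 d10 d01 2)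
        (Zcal s C d21 d10 d01 2 2)
   \<and> quot_iso3 s {x \<in> Ck s C 2. tot d21 d10 d01 x = 0} (tot d21 d10 d01 ` Ck s C 1)
        (ZN C d21 d10 d01 0 2) (tot d21 d10 d01 ` Ck s C 1 \<inter> C 2 0)
        (ker_varrho s C d21 d10 d01 2) (Bcal s C d21 d10 d01 2 1 \<inter> C 1 1)
        (Zcal s C d21 d10 d01 2 2) (d01 ` C 0 1)"
proof -
  let ?E = "comp s C 0 2 ` Z2"
  let ?E' = "comp s C 0 2 ` B2"
  let ?K = "comp s C 1 1 ` V2"
  let ?K' = "comp s C 1 1 ` V2'"
  have BZ: "B2 \<subseteq> Z2" using B2Z2 by blast
  have fa1: "\<And>x y. x \<in> Z2 \<Longrightarrow> y \<in> Z2 \<Longrightarrow> comp s C 0 2 (x + y) = comp s C 0 2 x + comp s C 0 2 y"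
    using c_add(1) by blast
  have fs1: "\<And>c x. x \<in> Z2 \<Longrightarrow> comp s C 0 2 (s c x) = s c (comp s C 0 2 x)"
    using c_scale(1) by blast
  have "\<exists>g. (\<forall>x y. g (x + y) = g x + g y) \<and> (\<forall>c x. g (s c x) = s c (g x))
     \<and> (\<forall>w\<in>?E. g w \<in> Z2 \<and> comp s C 0 2 (g w) = w) \<and> (\<forall>w\<in>?E'. g w \<in> B2)"
    by (rule section_lemma[OF subZ2 subB2 BZ fa1 fs1])
  then obtain g1 where g1all: "(\<forall>x y. g1 (x + y) = g1 x + g1 y) \<and> (\<forall>c x. g1 (s c x) = s c (g1 x))
     \<and> (\<forall>w\<in>?E. g1 w \<in> Z2 \<and> comp s C 0 2 (g1 w) = w) \<and> (\<forall>w\<in>?E'. g1 w \<in> B2)" by (rule exE)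
  note g1 = conjunct1[OF g1all] conjunct1[OF conjunct2[OF g1all]]
    conjunct1[OF conjunct2[OF conjunct2[OF g1all]]] conjunct2[OF conjunct2[OF conjunct2[OF g1all]]]
  have VV: "V2' \<subseteq> V2" using B2Z2 by blast
  have fa2: "\<And>x y. x \<in> V2 \<Longrightarrow> y \<in> V2 \<Longrightarrow> comp s C 1 1 (x + y) = comp s C 1 1 x + comp s C 1 1 y"
    using c_add(2) by blast
  have fs2: "\<And>c x. x \<in> V2 \<Longrightarrow> comp s C 1 1 (s c x) = s c (comp s C 1 1 x)"
    using c_scale(2) by blast
  have "\<exists>g. (\<forall>x y. g (x + y) = g x + g y) \<and> (\<forall>c x. g (s c x) = s c (g x))
     \<and> (\<forall>w\<in>?K. g w \<in> V2 \<and> comp s C 1 1 (g w) = w) \<and> (\<forall>w\<in>?K'. g w \<in> V2')"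
    by (rule section_lemma[OF subV2 subV2' VV fa2 fs2])
  then obtain g2 where g2all: "(\<forall>x y. g2 (x + y) = g2 x + g2 y) \<and> (\<forall>c x. g2 (s c x) = s c (g2 x))
     \<and> (\<forall>w\<in>?K. g2 w \<in> V2 \<and> comp s C 1 1 (g2 w) = w) \<and> (\<forall>w\<in>?K'. g2 w \<in> V2')" by (rule exE)
  note g2 = conjunct1[OF g2all] conjunct1[OF conjunct2[OF g2all]]
    conjunct1[OF conjunct2[OF conjunct2[OF g2all]]] conjunct2[OF conjunct2[OF conjunct2[OF g2all]]]
  have g10: "g1 0 = 0" using g1(2) by (metis scale_zero_left)
  have g20: "g2 0 = 0" using g2(2) by (metis scale_zero_left)
  define f where "f a c e = a + g2 c + g1 e" for a c e
  have EE: "?E' \<subseteq> ?E" using BZ by blast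
  have KK: "?K' \<subseteq> ?K" using VV by blast
  have aC: "comp s C 0 2 a = 0" "comp s C 1 1 a = 0" "a \<in> Ck s C 2" if "a \<in> C 2 0" for a
    using dec3(2,3)[OF that C0 C0] Ck2I[OF that C0 C0] by simp_all
  have KA: "f a c e \<in> Z2" if "a \<in> Z2" "c \<in> ?K" "e \<in> ?E" for a c e
  proof -
    have "g2 c \<in> Z2" "g1 e \<in> Z2" using g1(3) g2(3) that by auto
    then show ?thesis unfolding f_def using that(1) subspace_add[OF subZ2] by blast
  qed
  have KB: "f a c e \<in> B2" if "a \<in> B2" "c \<in> ?K'" "e \<in> ?E'" for a c e
  proof -
    have "g2 c \<in> B2" "g1 e \<in> B2" using g1(4) g2(4) that by auto
    then show ?thesis unfolding f_def using that(1) subspace_add[OF subB2] by blast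
  qed
  have KC: "comp s C 0 2 (a + g2 c) = 0" "comp s C 1 1 (a + g2 c) = c"
     "comp s C 0 2 (f a c e) = e" "a + g2 c \<in> Z2"
    if "a \<in> Z2 \<inter> C 2 0" "c \<in> ?K" "e \<in> ?E" for a c e
  proof -
    have gc: "g2 c \<in> Z2" "comp s C 0 2 (g2 c) = 0" "comp s C 1 1 (g2 c) = c" using g2(3) that(2) by auto
    have ge: "g1 e \<in> Z2" "comp s C 0 2 (g1 e) = e" using g1(3) that(3) by auto
    have a: "a \<in> Ck s C 2" "comp s C 0 2 a = 0" "comp s C 1 1 a = 0" using aC that(1) by auto
    have agc: "a + g2 c \<in> Z2" using that(1) gc(1) subspace_add[OF subZ2] by blast
    show "comp s C 0 2 (a + g2 c) = 0" using c_add(1)[of a "g2 c"] a gc by simp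
    show "comp s C 1 1 (a + g2 c) = c" using c_add(2)[of a "g2 c"] a gc by simp
    show "comp s C 0 2 (f a c e) = e" unfolding f_def
      using c_add(1)[of "a + g2 c" "g1 e"] c_add(1)[of a "g2 c"] a gc ge agc by simp
    show "a + g2 c \<in> Z2" by (rule agc)
  qed
  have KD: "\<exists>a c e. a \<in> Z2 \<inter> C 2 0 \<and> c \<in> ?K \<and> e \<in> ?E \<and> x = f a c e \<and>
              (x \<in> B2 \<longrightarrow> a \<in> B2 \<and> c \<in> ?K' \<and> e \<in> ?E')" if x: "x \<in> Z2" for x
  proof -
    define e where "e = comp s C 0 2 x"
    have eE: "e \<in> ?E" unfolding e_def using x by blast
    have ge: "g1 e \<in> Z2" "comp s C 0 2 (g1 e) = e" using g1(3) eE by auto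
    define x1 where "x1 = x - g1 e"
    have x1Z: "x1 \<in> Z2" unfolding x1_def using subspace_diff[OF subZ2 x ge(1)] .
    have x1c: "comp s C 0 2 x1 = 0" unfolding x1_def using c_diff(1)[of x "g1 e"] x ge e_def by simp
    define c where "c = comp s C 1 1 x1"
    have cK: "c \<in> ?K" unfolding c_def using x1Z x1c by blast
    have gc: "g2 c \<in> Z2" "comp s C 0 2 (g2 c) = 0" "comp s C 1 1 (g2 c) = c" using g2(3) cK by auto
    define x2 where "x2 = x1 - g2 c"
    have x2Z: "x2 \<in> Z2" unfolding x2_def using subspace_diff[OF subZ2 x1Z gc(1)] .
    have x2c: "comp s C 0 2 x2 = 0" "comp s C 1 1 x2 = 0" unfolding x2_def
      using c_diff[of x1 "g2 c"] x1Z gc x1c c_def by simp_all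
    obtain u v w where uvw: "u \<in> C 2 0" "v \<in> C 1 1" "w \<in> C 0 2" "x2 = u + v + w"
      using x2Z Ck2E by blast
    have "v = 0" "w = 0" using x2c dec3(2,3)[OF uvw(1-3)] uvw(4) by auto
    then have x2C: "x2 \<in> C 2 0" using uvw by simp
    have xe: "x = f x2 c e" unfolding f_def x2_def x1_def by simp
    have "x \<in> B2 \<longrightarrow> x2 \<in> B2 \<and> c \<in> ?K' \<and> e \<in> ?E'"
    proof
      assume xB: "x \<in> B2"
      have eE': "e \<in> ?E'" unfolding e_def using xB by blast
      then have "g1 e \<in> B2" using g1(4) by blast
      then have x1B: "x1 \<in> B2" unfolding x1_def using subspace_diff[OF subB2 xB] by blast
      then have cK': "c \<in> ?K'" unfolding c_def using x1c by blast
      then have "g2 c \<in> B2" using g2(4) by blast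
      then have "x2 \<in> B2" unfolding x2_def using subspace_diff[OF subB2 x1B] by blast
      then show "x2 \<in> B2 \<and> c \<in> ?K' \<and> e \<in> ?E'" using cK' eE' by blast
    qed
    then show ?thesis using x2Z x2C cK eE xe by blast
  qed
  have KE: "a \<in> B2 \<and> c \<in> ?K' \<and> e \<in> ?E'"
    if "a \<in> Z2 \<inter> C 2 0" "c \<in> ?K" "e \<in> ?E" "f a c e \<in> B2" for a c e
  proof -
    note kc = KC[OF that(1-3)]
    have eE': "e \<in> ?E'" using kc(3) that(4) by (metis image_eqI)
    then have g1B: "g1 e \<in> B2" using g1(4) by blast
    have "a + g2 c = f a c e - g1 e" unfolding f_def by simp
    then have x1B: "a + g2 c \<in> B2" using subspace_diff[OF subB2 that(4) g1B] by simp
    then have cK': "c \<in> ?K'" using kc(1,2) by (metis (mono_tags, lifting) image_eqI mem_Collect_eq)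
    then have "g2 c \<in> B2" using g2(4) by blast
    then have "(a + g2 c) - g2 c \<in> B2" using subspace_diff[OF subB2 x1B] by blast
    then show ?thesis using cK' eE' by simp
  qed
  have KF: "a = 0 \<and> c = 0 \<and> e = 0"
    if "a \<in> Z2 \<inter> C 2 0" "c \<in> ?K" "e \<in> ?E" "f a c e = 0" for a c e
  proof -
    note kc = KC[OF that(1-3)]
    have e0: "e = 0" using kc(3) that(4) comp0 by simp
    then have "a + g2 c = 0" using that(4) g10 unfolding f_def by simp
    then have c0: "c = 0" using kc(2) comp0 by simp
    then have "a = 0" using \<open>a + g2 c = 0\<close> g20 by simp
    then show ?thesis using e0 c0 by simp
  qed
  have LA: "f (a + a') (c + c') (e + e') = f a c e + f a' c' e'" for a c e a' c' e'
    unfolding f_def using g1(1) g2(1) by (simp add: ac_simps)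
  have LS: "f (s r a) (s r c) (s r e) = s r (f a c e)" for r a c e
    unfolding f_def using g1(2) g2(2) by (simp add: scale_right_distrib)
  have f000: "f 0 0 0 = 0" unfolding f_def using g10 g20 by simp
  have iso1: "quot_iso3 s B2 {0} (B2 \<inter> C 2 0) {0} ?K' {0} ?E' {0}"
    unfolding quot_iso3_def
  proof (rule exI[of _ f], intro conjI)
    show "\<forall>a\<in>B2 \<inter> C 2 0. \<forall>c\<in>?K'. \<forall>e\<in>?E'. f a c e \<in> B2"
    proof (intro ballI)
      fix a c e assume "a \<in> B2 \<inter> C 2 0" "c \<in> ?K'" "e \<in> ?E'"
      then show "f a c e \<in> B2" using KB[of a c e] by simp
    qed
    show "\<forall>a\<in>B2 \<inter> C 2 0. \<forall>c\<in>?K'. \<forall>e\<in>?E'. \<forall>a'\<in>B2 \<inter> C 2 0. \<forall>c'\<in>?K'. \<forall>e'\<in>?E'.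
            f (a + a') (c + c') (e + e') = f a c e + f a' c' e'" by (intro ballI) (rule LA)
    show "\<forall>r. \<forall>a\<in>B2 \<inter> C 2 0. \<forall>c\<in>?K'. \<forall>e\<in>?E'. f (s r a) (s r c) (s r e) = s r (f a c e)"
      by (intro allI ballI) (rule LS)
    show "\<forall>a\<in>B2 \<inter> C 2 0. \<forall>c\<in>?K'. \<forall>e\<in>?E'. (f a c e \<in> {0}) = (a \<in> {0} \<and> c \<in> {0} \<and> e \<in> {0})"
    proof (intro ballI)
      fix a c e assume h: "a \<in> B2 \<inter> C 2 0" "c \<in> ?K'" "e \<in> ?E'"
      have h2: "a \<in> Z2 \<inter> C 2 0" using h(1) BZ by blast
      have h3: "c \<in> ?K" using KK h(2) by (rule subsetD)
      have h4: "e \<in> ?E" using EE h(3) by (rule subsetD)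
      show "(f a c e \<in> {0}) = (a \<in> {0} \<and> c \<in> {0} \<and> e \<in> {0})"
        using KF[OF h2 h3 h4] f000 by auto
    qed
    show "\<forall>g\<in>B2. \<exists>a\<in>B2 \<inter> C 2 0. \<exists>c\<in>?K'. \<exists>e\<in>?E'. g - f a c e \<in> {0}"
    proof
      fix g assume g: "g \<in> B2"
      then have "g \<in> Z2" using BZ by (rule subsetD[rotated])
      from KD[OF this] obtain a c e where "a \<in> Z2 \<inter> C 2 0" "g = f a c e"
        "g \<in> B2 \<longrightarrow> a \<in> B2 \<and> c \<in> ?K' \<and> e \<in> ?E'" by blast
      then have "a \<in> B2 \<inter> C 2 0" "c \<in> ?K'" "e \<in> ?E'" "g - f a c e \<in> {0}" using g by auto
      then show "\<exists>a\<in>B2 \<inter> C 2 0. \<exists>c\<in>?K'. \<exists>e\<in>?E'. g - f a c e \<in> {0}" by blast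
    qed
  qed
  have iso2: "quot_iso3 s Z2 {0} (Z2 \<inter> C 2 0) {0} ?K {0} ?E {0}"
    unfolding quot_iso3_def
  proof (rule exI[of _ f], intro conjI)
    show "\<forall>a\<in>Z2 \<inter> C 2 0. \<forall>c\<in>?K. \<forall>e\<in>?E. f a c e \<in> Z2"
    proof (intro ballI)
      fix a c e assume "a \<in> Z2 \<inter> C 2 0" "c \<in> ?K" "e \<in> ?E"
      then show "f a c e \<in> Z2" using KA[of a c e] by simp
    qed
    show "\<forall>a\<in>Z2 \<inter> C 2 0. \<forall>c\<in>?K. \<forall>e\<in>?E. \<forall>a'\<in>Z2 \<inter> C 2 0. \<forall>c'\<in>?K. \<forall>e'\<in>?E.
            f (a + a') (c + c') (e + e') = f a c e + f a' c' e'" by (intro ballI) (rule LA)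
    show "\<forall>r. \<forall>a\<in>Z2 \<inter> C 2 0. \<forall>c\<in>?K. \<forall>e\<in>?E. f (s r a) (s r c) (s r e) = s r (f a c e)"
      by (intro allI ballI) (rule LS)
    show "\<forall>a\<in>Z2 \<inter> C 2 0. \<forall>c\<in>?K. \<forall>e\<in>?E. (f a c e \<in> {0}) = (a \<in> {0} \<and> c \<in> {0} \<and> e \<in> {0})"
    proof (intro ballI)
      fix a c e assume h: "a \<in> Z2 \<inter> C 2 0" "c \<in> ?K" "e \<in> ?E"
      show "(f a c e \<in> {0}) = (a \<in> {0} \<and> c \<in> {0} \<and> e \<in> {0})"
        using KF[OF h] f000 by auto
    qed
    show "\<forall>g\<in>Z2. \<exists>a\<in>Z2 \<inter> C 2 0. \<exists>c\<in>?K. \<exists>e\<in>?E. g - f a c e \<in> {0}"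
    proof
      fix g assume g: "g \<in> Z2"
      from KD[OF this] obtain a c e where "a \<in> Z2 \<inter> C 2 0" "c \<in> ?K" "e \<in> ?E" "g = f a c e" by blast
      then have "g - f a c e \<in> {0}" by simp
      then show "\<exists>a\<in>Z2 \<inter> C 2 0. \<exists>c\<in>?K. \<exists>e\<in>?E. g - f a c e \<in> {0}"
        using \<open>a \<in> Z2 \<inter> C 2 0\<close> \<open>c \<in> ?K\<close> \<open>e \<in> ?E\<close> by blast
    qed
  qed
  have iso3: "quot_iso3 s Z2 B2 (Z2 \<inter> C 2 0) (B2 \<inter> C 2 0) ?K ?K' ?E ?E'"
    unfolding quot_iso3_def
  proof (rule exI[of _ f], intro conjI)
    show "\<forall>a\<in>Z2 \<inter> C 2 0. \<forall>c\<in>?K. \<forall>e\<in>?E. f a c e \<in> Z2"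
    proof (intro ballI)
      fix a c e assume "a \<in> Z2 \<inter> C 2 0" "c \<in> ?K" "e \<in> ?E"
      then show "f a c e \<in> Z2" using KA[of a c e] by simp
    qed
    show "\<forall>a\<in>Z2 \<inter> C 2 0. \<forall>c\<in>?K. \<forall>e\<in>?E. \<forall>a'\<in>Z2 \<inter> C 2 0. \<forall>c'\<in>?K. \<forall>e'\<in>?E.
            f (a + a') (c + c') (e + e') = f a c e + f a' c' e'" by (intro ballI) (rule LA)
    show "\<forall>r. \<forall>a\<in>Z2 \<inter> C 2 0. \<forall>c\<in>?K. \<forall>e\<in>?E. f (s r a) (s r c) (s r e) = s r (f a c e)"
      by (intro allI ballI) (rule LS)
    show "\<forall>a\<in>Z2 \<inter> C 2 0. \<forall>c\<in>?K. \<forall>e\<in>?E. (f a c e \<in> B2) = (a \<in> B2 \<inter> C 2 0 \<and> c \<in> ?K' \<and> e \<in> ?E')"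
    proof (intro ballI iffI)
      fix a c e assume h: "a \<in> Z2 \<inter> C 2 0" "c \<in> ?K" "e \<in> ?E" "f a c e \<in> B2"
      have "a \<in> B2 \<and> c \<in> ?K' \<and> e \<in> ?E'" using KE[OF h] .
      then show "a \<in> B2 \<inter> C 2 0 \<and> c \<in> ?K' \<and> e \<in> ?E'" using h(1) by simp
    next
      fix a c e assume h: "a \<in> Z2 \<inter> C 2 0" "c \<in> ?K" "e \<in> ?E" "a \<in> B2 \<inter> C 2 0 \<and> c \<in> ?K' \<and> e \<in> ?E'"
      then have "a \<in> B2" "c \<in> ?K'" "e \<in> ?E'" by simp_all
      then show "f a c e \<in> B2" by (rule KB)
    qed
    show "\<forall>g\<in>Z2. \<exists>a\<in>Z2 \<inter> C 2 0. \<exists>c\<in>?K. \<exists>e\<in>?E. g - f a c e \<in> B2"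
    proof
      fix g assume g: "g \<in> Z2"
      from KD[OF this] obtain a c e where "a \<in> Z2 \<inter> C 2 0" "c \<in> ?K" "e \<in> ?E" "g = f a c e" by blast
      moreover have "(0::'v) \<in> B2" using subspace_0[OF subB2] .
      ultimately have "g - f a c e \<in> B2" by simp
      then show "\<exists>a\<in>Z2 \<inter> C 2 0. \<exists>c\<in>?K. \<exists>e\<in>?E. g - f a c e \<in> B2"
        using \<open>a \<in> Z2 \<inter> C 2 0\<close> \<open>c \<in> ?K\<close> \<open>e \<in> ?E\<close> by blast
    qed
  qed
  show ?thesis unfolding F1[symmetric] F2[symmetric] F3[symmetric] F4[symmetric] F5
    by (intro conjI iso1 iso2 iso3)
qed

end


theorem corollary5p6:
  fixes s :: "'f::field \<Rightarrow> 'v::ab_group_add \<Rightarrow> 'v"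
    and C :: "int \<Rightarrow> int \<Rightarrow> 'v set"
    and d21 d10 d01 :: "'v \<Rightarrow> 'v"
  assumes vs: "vector_space s"
    and sub: "\<And>p q. module.subspace s (C p q)"
    and zero: "\<And>p q. p < 0 \<or> q < 0 \<Longrightarrow> C p q = {0}"
    and dsum: "indep_family C"
    and lin: "Vector_Spaces.linear s s d21" "Vector_Spaces.linear s s d10" "Vector_Spaces.linear s s d01"
    and bideg: "\<And>p q x. x \<in> C p q \<Longrightarrow> d21 x \<in> C (p + 2) (q - 1)"
               "\<And>p q x. x \<in> C p q \<Longrightarrow> d10 x \<in> C (p + 1) q"
               "\<And>p q x. x \<in> C p q \<Longrightarrow> d01 x \<in> C p (q + 1)"
    and sq: "\<And>k x. x \<in> Ck s C k \<Longrightarrow> tot d21 d10 d01 (tot d21 d10 d01 x) = 0"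
  shows
    "lin_iso3 s (tot d21 d10 d01 ` Ck s C 1)
        (tot d21 d10 d01 ` Ck s C 1 \<inter> C 2 0)
        (Bcal s C d21 d10 d01 2 1 \<inter> C 1 1)
        (d01 ` C 0 1)
   \<and> lin_iso3 s {x \<in> Ck s C 2. tot d21 d10 d01 x = 0}
        (ZN C d21 d10 d01 0 2)
        (ker_varrho s C d21 d10 d01 2)
        (Zcal s C d21 d10 d01 2 2)
   \<and> quot_iso3 s {x \<in> Ck s C 2. tot d21 d10 d01 x = 0} (tot d21 d10 d01 ` Ck s C 1)
        (ZN C d21 d10 d01 0 2) (tot d21 d10 d01 ` Ck s C 1 \<inter> C 2 0)
        (ker_varrho s C d21 d10 d01 2) (Bcal s C d21 d10 d01 2 1 \<inter> C 1 1)
        (Zcal s C d21 d10 d01 2 2) (d01 ` C 0 1)"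
proof -
  interpret bigr s C d21 d10 d01
    by (intro bigr.intro bigr_axioms.intro vs sub zero dsum lin bideg sq)
  show ?thesis by (rule main)
qed

end
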